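(* Assume the negation of the Continuum Hypothesis. Then the Banach space $\ell_\infty$ has no overcomplete set.
   Context: A subset $S$ of a Banach space $X$ with $|S| = \operatorname{dens} X$ (density character) is called overcomplete if every subset $\Lambda \subseteq S$ with $|\Lambda| = |S|$ is linearly dense in $X$. *)

theory Defs
  imports "HOL-Analysis.Analysis" "HOL-Library.Equipollence"
begin

definition CH :: bool where
  "CH \<longleftrightarrow> (\<forall>A :: real set. countable A \<or> A \<approx> (UNIV :: real set))"

text \<open>The cardinality of S equals the density character of the whole space:
  S is equipotent to some dense subset, and S injects into every dense subset.\<close>
definition card_eq_dens :: "'a::real_normed_vector set \<Rightarrow> bool" where
  "card_eq_dens S \<longleftrightarrow>
     (\<exists>D::'a set. closure D = UNIV \<and> S \<approx> D) \<and> (\<forall>D::'a set. closure D = UNIV \<longrightarrow> S \<lesssim> D)"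

definition overcomplete :: "'a::real_normed_vector set \<Rightarrow> bool" where
  "overcomplete S \<longleftrightarrow> card_eq_dens S \<and>
     (\<forall>\<Lambda>. \<Lambda> \<subseteq> S \<and> \<Lambda> \<approx> S \<longrightarrow> closure (span \<Lambda>) = UNIV)"

(* l_infinity is modelled as the type of bounded (automatically continuous) real
  sequences nat =>_C real with the sup norm. *)

end

theory Submission
  imports Defs "HOL-Library.Countable_Set_Type"
begin
unbundle cardinal_syntax


abbreviation "w1 \<equiv> cardSuc natLeq"

lemma w1_card: "Card_order w1" by (simp add: cardSuc_Card_order natLeq_Card_order)
lemma w1_wo: "Well_order w1" by (simp add: cardSuc_Well_order natLeq_Card_order)

lemma w1_inf: "\<not> finite (Field w1)"
  using cardSuc_finite cinfinite_def natLeq_Cinfinite by blast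

lemma uncountable_w1: assumes "\<not> countable A" shows "w1 \<le>o |A|"
proof -
  have "\<not> |A| \<le>o natLeq" using assms countable_card_le_natLeq by blast
  then have "natLeq <o |A|" using not_ordLeq_iff_ordLess natLeq_Well_order card_of_Well_order by blast
  then show ?thesis using cardSuc_ordLess_ordLeq natLeq_Card_order card_of_Card_order by blast
qed

lemma countable_le_w1: "countable A \<Longrightarrow> |A| \<le>o w1"
  using countable_card_le_natLeq cardSuc_ordLeq natLeq_Card_order ordLeq_transitive by blast

lemma w1_subset: assumes "w1 \<le>o |A|" shows "\<exists>D\<subseteq>A. |D| =o w1"
proof -
  have "|Field w1| \<le>o |A|" using assms card_of_Field_ordIso[OF w1_card] ordIso_ordLeq_trans by blast
  then obtain f where f: "inj_on f (Field w1)" "f ` Field w1 \<subseteq> A"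
    using card_of_ordLeq[of "Field w1" A] by auto
  have "bij_betw f (Field w1) (f ` Field w1)" by (rule inj_on_imp_bij_betw[OF f(1)])
  then have "|Field w1| =o |f ` Field w1|" using card_of_ordIso by blast
  then have "|f ` Field w1| =o |Field w1|" using ordIso_symmetric by blast
  then have "|f ` Field w1| =o w1" using card_of_Field_ordIso[OF w1_card] ordIso_transitive by blast
  thus ?thesis using f(2) by blast
qed

lemma w1_uncountable: assumes "|D| =o w1" shows "\<not> countable D"
proof
  assume "countable D"
  then have "|D| \<le>o natLeq" using countable_card_le_natLeq by blast
  moreover have "natLeq <o |D|" using assms cardSuc_greater[OF natLeq_Card_order]
    ordLess_ordIso_trans ordIso_symmetric by blast
  ultimately show False using not_ordLess_ordLeq by blast
qed

lemma comb:
  fixes S :: "'x set" and N :: "'x \<Rightarrow> 'y set" and T :: "'y set"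
  assumes T: "w1 <o |T|" and N: "\<And>x. x\<in>S \<Longrightarrow> countable (N x)"
  shows "\<exists>\<theta>\<in>T. |{x\<in>S. \<theta> \<notin> N x}| =o |S|"
proof (rule ccontr)
  define E where "E \<theta> = {x\<in>S. \<theta> \<notin> N x}" for \<theta>
  assume "\<not> ?thesis"
  then have ne: "\<And>\<theta>. \<theta>\<in>T \<Longrightarrow> \<not> |E \<theta>| =o |S|" unfolding E_def by blast
  have small: "|E \<theta>| <o |S|" if "\<theta>\<in>T" for \<theta>
  proof -
    have "|E \<theta>| \<le>o |S|" by (rule card_of_mono1) (auto simp: E_def)
    then show ?thesis using ne[OF that] ordLeq_iff_ordLess_or_ordIso by blast
  qed
  have wS: "w1 <o |S|"
  proof (rule ccontr)
    assume "\<not> w1 <o |S|"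
    then have Sw: "|S| \<le>o w1" using not_ordLeq_iff_ordLess w1_wo card_of_Well_order by blast
    let ?U = "\<Union>x\<in>S. N x"
    have "\<forall>x\<in>S. |N x| \<le>o w1" using N countable_le_w1 by blast
    then have U: "|?U| \<le>o w1" using card_of_UNION_ordLeq_infinite_Field[OF w1_inf w1_card Sw] by blast
    have "\<not> T \<subseteq> ?U"
    proof
      assume "T \<subseteq> ?U"
      then have "|T| \<le>o |?U|" by (rule card_of_mono1)
      then have "|T| \<le>o w1" using U ordLeq_transitive by blast
      then show False using T not_ordLess_ordLeq by blast
    qed
    then obtain \<theta> where th: "\<theta> \<in> T" "\<theta> \<notin> ?U" by blast
    then have "E \<theta> = S" unfolding E_def by blast
    then show False using small[OF th(1)] ordLess_irreflexive by metis
  qed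
  have Sinf: "\<not> finite S"
  proof
    assume "finite S"
    moreover have "w1 \<le>o |S|" using wS ordLess_imp_ordLeq by blast
    ultimately show False
      by (metis card_of_Field_ordIso w1_card ordIso_ordLeq_trans card_of_ordLeq_finite w1_inf)
  qed
  define L where "L \<theta>0 = {\<theta>\<in>T. |E \<theta>| \<le>o |E \<theta>0|}" for \<theta>0
  have Lc: "countable (L \<theta>0)" if th0: "\<theta>0 \<in> T" for \<theta>0
  proof (rule ccontr)
    assume "\<not> countable (L \<theta>0)"
    then obtain D where D: "D \<subseteq> L \<theta>0" "|D| =o w1" using w1_subset uncountable_w1 by blast
    have Dunc: "\<not> countable D" using w1_uncountable D(2) by blast
    have cov: "S \<subseteq> (\<Union>\<theta>\<in>D. E \<theta>)"
    proof
      fix x assume x: "x \<in> S"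
      have "\<not> D \<subseteq> N x" using N[OF x] Dunc countable_subset by blast
      then obtain \<theta> where "\<theta> \<in> D" "\<theta> \<notin> N x" by blast
      then show "x \<in> (\<Union>\<theta>\<in>D. E \<theta>)" using x unfolding E_def by blast
    qed
    let ?B = "D <+> E \<theta>0"
    have "|D| <o |S|" using D(2) wS ordIso_ordLess_trans by blast
    then have Bs: "|?B| <o |S|" using card_of_Plus_ordLess_infinite[OF Sinf _ small[OF th0]] by blast
    have Binf: "\<not> finite ?B" using Dunc uncountable_infinite finite_Plus_iff by blast
    have "\<forall>\<theta>\<in>D. |E \<theta>| \<le>o |?B|"
    proof
      fix \<theta> assume "\<theta> \<in> D"
      then have "|E \<theta>| \<le>o |E \<theta>0|" using D(1) unfolding L_def by blast
      moreover have "|E \<theta>0| \<le>o |?B|" by (rule card_of_Plus2)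
      ultimately show "|E \<theta>| \<le>o |?B|" using ordLeq_transitive by blast
    qed
    moreover have "|D| \<le>o |?B|" by (rule card_of_Plus1)
    ultimately have "|\<Union>\<theta>\<in>D. E \<theta>| \<le>o |?B|" using card_of_UNION_ordLeq_infinite[OF Binf] by blast
    moreover have "|S| \<le>o |\<Union>\<theta>\<in>D. E \<theta>|" using cov by (rule card_of_mono1)
    ultimately have "|S| \<le>o |?B|" using ordLeq_transitive by blast
    then show False using Bs not_ordLess_ordLeq by blast
  qed
  obtain B where B: "B \<subseteq> T" "|B| =o w1" using w1_subset T ordLess_imp_ordLeq by blast
  have Bunc: "\<not> countable B" using w1_uncountable B(2) by blast
  show False
  proof (cases "\<exists>\<theta>0\<in>T. B \<subseteq> L \<theta>0")
    case True
    then show False using Lc Bunc countable_subset by blast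
  next
    case False
    have cov: "T \<subseteq> (\<Union>\<theta>\<in>B. L \<theta>)"
    proof
      fix \<theta>0 assume th0: "\<theta>0 \<in> T"
      with False obtain \<theta> where th: "\<theta> \<in> B" "\<theta> \<notin> L \<theta>0" by blast
      then have "\<not> |E \<theta>| \<le>o |E \<theta>0|" using B(1) unfolding L_def by blast
      then have "|E \<theta>0| <o |E \<theta>|" using not_ordLeq_iff_ordLess card_of_Well_order by blast
      then have "\<theta>0 \<in> L \<theta>" using th0 ordLess_imp_ordLeq unfolding L_def by blast
      then show "\<theta>0 \<in> (\<Union>\<theta>\<in>B. L \<theta>)" using th(1) by blast
    qed
    have "\<forall>\<theta>\<in>B. |L \<theta>| \<le>o w1" using Lc B(1) countable_le_w1 by blast
    moreover have "|B| \<le>o w1" using B(2) ordIso_iff_ordLeq by blast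
    ultimately have "|\<Union>\<theta>\<in>B. L \<theta>| \<le>o w1"
      using card_of_UNION_ordLeq_infinite_Field[OF w1_inf w1_card] by blast
    moreover have "|T| \<le>o |\<Union>\<theta>\<in>B. L \<theta>|" using cov by (rule card_of_mono1)
    ultimately have "|T| \<le>o w1" using ordLeq_transitive by blast
    then show False using T not_ordLess_ordLeq by blast
  qed
qed



definition pfil :: "nat set set \<Rightarrow> bool" where
  "pfil U \<longleftrightarrow> UNIV \<in> U \<and> {} \<notin> U \<and> (\<forall>A\<in>U. \<forall>B\<in>U. A \<inter> B \<in> U) \<and> (\<forall>A\<in>U. \<forall>B. A \<subseteq> B \<longrightarrow> B \<in> U)"

definition cof :: "nat set set" where "cof = {A. finite (- A)}"

lemma pfil_cof: "pfil cof"
  unfolding pfil_def cof_def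
  by (auto simp: Compl_Int) (meson Compl_subset_Compl_iff finite_subset)

lemma ultra_exists: "\<exists>U. pfil U \<and> cof \<subseteq> U \<and> (\<forall>A. A \<in> U \<or> - A \<in> U)"
proof -
  let ?A = "{U. pfil U \<and> cof \<subseteq> U}"
  have "\<forall>C\<in>chains ?A. \<exists>U\<in>?A. \<forall>X\<in>C. X \<subseteq> U"
  proof
    fix C assume C: "C \<in> chains ?A"
    show "\<exists>U\<in>?A. \<forall>X\<in>C. X \<subseteq> U"
    proof (cases "C = {}")
      case True then show ?thesis using pfil_cof by auto
    next
      case False
      have sub: "C \<subseteq> ?A" and ch: "\<forall>X\<in>C. \<forall>Y\<in>C. X \<subseteq> Y \<or> Y \<subseteq> X"
        using C unfolding chains_def chain_subset_def by auto
      have "pfil (\<Union>C)"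
        unfolding pfil_def
      proof (intro conjI ballI allI impI)
        show "UNIV \<in> \<Union>C" using False sub unfolding pfil_def by blast
        show "{} \<notin> \<Union>C" using sub unfolding pfil_def by blast
      next
        fix A B assume "A \<in> \<Union>C" "B \<in> \<Union>C"
        then obtain X Y where XY: "X \<in> C" "Y \<in> C" "A \<in> X" "B \<in> Y" by blast
        show "A \<inter> B \<in> \<Union>C"
        proof (cases "X \<subseteq> Y")
          case True
          then have "pfil Y" "A \<in> Y" using XY sub by auto
          then show ?thesis using XY unfolding pfil_def by blast
        next
          case False
          then have "Y \<subseteq> X" using ch XY by blast
          then have "pfil X" "B \<in> X" using XY sub by auto
          then show ?thesis using XY unfolding pfil_def by blast
        qed
      next
        fix A B assume "A \<in> \<Union>C" "A \<subseteq> B"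
        then show "B \<in> \<Union>C" using sub unfolding pfil_def by blast
      qed
      moreover have "cof \<subseteq> \<Union>C" using False sub by blast
      ultimately show ?thesis by blast
    qed
  qed
  then obtain M where M: "M \<in> ?A" and max: "\<forall>X\<in>?A. M \<subseteq> X \<longrightarrow> X = M"
    using Zorn_Lemma2[of ?A] by blast
  have "- A \<in> M \<or> A \<in> M" for A
  proof (rule disjCI)
    assume nA: "A \<notin> M"
    let ?M' = "{Y. \<exists>Z\<in>M. Z \<inter> - A \<subseteq> Y}"
    have pM: "pfil M" using M by blast
    have "pfil ?M'"
      unfolding pfil_def
    proof (intro conjI ballI allI impI)
      show "UNIV \<in> ?M'" using pM unfolding pfil_def by blast
      show "{} \<notin> ?M'"
      proof
        assume "{} \<in> ?M'"
        then obtain Z where "Z \<in> M" "Z \<subseteq> A" by blast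
        then show False using nA pM unfolding pfil_def by blast
      qed
    next
      fix X Y assume "X \<in> ?M'" "Y \<in> ?M'"
      then obtain Z1 Z2 where "Z1 \<in> M" "Z2 \<in> M" "Z1 \<inter> - A \<subseteq> X" "Z2 \<inter> - A \<subseteq> Y" by blast
      moreover have "Z1 \<inter> Z2 \<in> M" using calculation pM unfolding pfil_def by blast
      ultimately show "X \<inter> Y \<in> ?M'" by blast
    next
      fix X Y assume "X \<in> ?M'" "X \<subseteq> Y"
      then show "Y \<in> ?M'" by blast
    qed
    moreover have MM: "M \<subseteq> ?M'" by blast
    moreover have "cof \<subseteq> M" using M by blast
    ultimately have "cof \<subseteq> ?M'" by (meson subset_trans)
    with \<open>pfil ?M'\<close> have inA: "?M' \<in> ?A" by (intro CollectI conjI)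
    have "?M' = M" using mp[OF bspec[OF max inA] MM] .
    moreover have "- A \<in> ?M'" using pM unfolding pfil_def by blast
    ultimately show "- A \<in> M" by simp
  qed
  note ult = this
  have "pfil M" "cof \<subseteq> M" using M by auto
  then show ?thesis
  proof (intro exI[of _ M] conjI allI)
    fix A show "A \<in> M \<or> - A \<in> M" using ult[of A] by blast
  qed
qed

definition UM :: "nat set set" where
  "UM = (SOME U. pfil U \<and> cof \<subseteq> U \<and> (\<forall>A. A \<in> U \<or> - A \<in> U))"

lemma UM: "pfil UM" "cof \<subseteq> UM" "\<And>A. A \<in> UM \<or> - A \<in> UM"
proof -
  have "pfil UM \<and> cof \<subseteq> UM \<and> (\<forall>A. A \<in> UM \<or> - A \<in> UM)"
    unfolding UM_def by (rule someI_ex[OF ultra_exists])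
  then show "pfil UM" "cof \<subseteq> UM" "\<And>A. A \<in> UM \<or> - A \<in> UM" by auto
qed

lemma UM_univ: "UNIV \<in> UM" and UM_empty: "{} \<notin> UM"
  and UM_int: "A \<in> UM \<Longrightarrow> B \<in> UM \<Longrightarrow> A \<inter> B \<in> UM"
  and UM_sup: "A \<in> UM \<Longrightarrow> A \<subseteq> B \<Longrightarrow> B \<in> UM"
  using UM(1) unfolding pfil_def by blast+

definition UF :: "nat filter" where
  "UF = Abs_filter (\<lambda>P. {n. P n} \<in> UM)"

lemma eventually_UF: "eventually P UF \<longleftrightarrow> {n. P n} \<in> UM"
  unfolding UF_def
proof (rule eventually_Abs_filter)
  show "is_filter (\<lambda>P. {n. P n} \<in> UM)"
  proof
    show "{n. True} \<in> UM" using UM_univ by simp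
  next
    fix P Q assume "{n. P n} \<in> UM" "{n. Q n} \<in> UM"
    then have "{n. P n} \<inter> {n. Q n} \<in> UM" by (rule UM_int)
    moreover have "{n. P n} \<inter> {n. Q n} = {n. P n \<and> Q n}" by auto
    ultimately show "{n. P n \<and> Q n} \<in> UM" by simp
  next
    fix P Q assume PQ: "\<forall>x. P x \<longrightarrow> Q x" and P: "{n. P n} \<in> UM"
    have "{n. P n} \<subseteq> {n. Q n}" using PQ by auto
    with P show "{n. Q n} \<in> UM" by (rule UM_sup)
  qed
qed

lemma UF_nonbot: "UF \<noteq> bot"
proof
  assume "UF = bot"
  then have "eventually (\<lambda>n. False) UF" by simp
  then have "{n. False} \<in> UM" unfolding eventually_UF .
  then show False using UM_empty by simp
qed

lemma UF_seq: "UF \<le> sequentially"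
proof (rule filter_leI)
  fix P assume "eventually P sequentially"
  then obtain N where N: "\<forall>n\<ge>N. P n" by (auto simp: eventually_sequentially)
  have "- {n. P n} \<subseteq> {..<N}"
  proof
    fix n assume "n \<in> - {n. P n}"
    then have nP: "\<not> P n" by simp
    show "n \<in> {..<N}"
    proof (rule ccontr)
      assume "n \<notin> {..<N}"
      then have "n \<ge> N" by simp
      then show False using N nP by blast
    qed
  qed
  then have "finite (- {n. P n})" by (rule finite_subset) simp
  then have "{n. P n} \<in> cof" unfolding cof_def by simp
  then show "eventually P UF" unfolding eventually_UF using UM(2) by (rule subsetD[rotated])
qed

lemma UF_ultra: "eventually P UF \<or> eventually (\<lambda>n. \<not> P n) UF"
proof -
  have "- {n. P n} = {n. \<not> P n}" by auto
  then show ?thesis using UM(3)[of "{n. P n}"] unfolding eventually_UF by simp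
qed

lemma UF_conv:
  fixes s :: "nat \<Rightarrow> real"
  assumes B: "\<And>n. \<bar>s n\<bar> \<le> B"
  shows "\<exists>L. (s \<longlongrightarrow> L) UF"
proof -
  let ?Q = "{t. eventually (\<lambda>n. t \<le> s n) UF}"
  have mQ: "- B \<in> ?Q"
    using B by (auto intro!: always_eventually simp: abs_le_iff) (smt (verit) B abs_le_iff)
  have bQ: "t \<le> B" if "t \<in> ?Q" for t
  proof (rule ccontr)
    assume "\<not> t \<le> B"
    then have "\<forall>n. \<not> t \<le> s n" using B by (smt (verit))
    then have "eventually (\<lambda>n. False) UF" using that by (auto elim: eventually_mono)
    then show False using UF_nonbot by (simp add: eventually_False)
  qed
  have bdd: "bdd_above ?Q" by (rule bdd_aboveI[of _ B]) (use bQ in blast)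
  let ?L = "Sup ?Q"
  have "(s \<longlongrightarrow> ?L) UF"
  proof (rule order_tendstoI)
    fix a assume "a < ?L"
    then obtain t where t: "t \<in> ?Q" "a < t" using less_cSup_iff[OF _ bdd] mQ by blast
    then show "eventually (\<lambda>n. a < s n) UF" by (auto elim: eventually_mono)
  next
    fix b assume b: "?L < b"
    have "b \<notin> ?Q" using b cSup_upper[OF _ bdd] by force
    then have "eventually (\<lambda>n. \<not> b \<le> s n) UF" using UF_ultra[of "\<lambda>n. b \<le> s n"] by blast
    then show "eventually (\<lambda>n. s n < b) UF" by (auto elim: eventually_mono)
  qed
  then show ?thesis by blast
qed



definition ces :: "(nat \<Rightarrow> real) \<Rightarrow> nat \<Rightarrow> real" where
  "ces s n = (\<Sum>k\<le>n. s k) / real (Suc n)"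

definition mu :: "(nat \<Rightarrow> real) \<Rightarrow> real" where
  "mu s = Lim UF (ces s)"

definition bnd :: "(nat \<Rightarrow> real) \<Rightarrow> bool" where
  "bnd s \<longleftrightarrow> (\<exists>B. \<forall>n. \<bar>s n\<bar> \<le> B)"

lemma UF_nontriv: "\<not> trivial_limit UF"
  using UF_nonbot by simp

lemma ces_bound:
  assumes "\<And>n. \<bar>s n\<bar> \<le> B" shows "\<bar>ces s n\<bar> \<le> B"
proof -
  have "\<bar>\<Sum>k\<le>n. s k\<bar> \<le> (\<Sum>k\<le>n. \<bar>s k\<bar>)" by (rule sum_abs)
  also have "\<dots> \<le> (\<Sum>k\<le>n. B)" by (rule sum_mono) (rule assms)
  also have "\<dots> = real (Suc n) * B" by simp
  finally have "\<bar>\<Sum>k\<le>n. s k\<bar> \<le> real (Suc n) * B" .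
  then show ?thesis unfolding ces_def by (simp add: divide_le_eq mult.commute)
qed

lemma mu_eqI: "(ces s \<longlongrightarrow> L) UF \<Longrightarrow> mu s = L"
  unfolding mu_def by (rule tendsto_Lim[OF UF_nontriv])

lemma mu_tendsto: assumes "bnd s" shows "(ces s \<longlongrightarrow> mu s) UF"
proof -
  obtain B where B: "\<And>n. \<bar>s n\<bar> \<le> B" using assms unfolding bnd_def by blast
  have "\<And>n. \<bar>ces s n\<bar> \<le> B" by (rule ces_bound) (rule B)
  then obtain L where L: "(ces s \<longlongrightarrow> L) UF" using UF_conv[of "ces s" B] by blast
  then show ?thesis using mu_eqI[OF L] by simp
qed

lemma mu_seq: "(ces s \<longlongrightarrow> L) sequentially \<Longrightarrow> mu s = L"
  by (rule mu_eqI) (rule filterlim_mono[OF _ order_refl UF_seq])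

lemma bnd_add: "bnd s \<Longrightarrow> bnd t \<Longrightarrow> bnd (\<lambda>n. s n + t n)"
  unfolding bnd_def by (metis abs_triangle_ineq add_mono order_trans)

lemma bnd_mult: "bnd s \<Longrightarrow> bnd t \<Longrightarrow> bnd (\<lambda>n. s n * t n)"
proof -
  assume "bnd s" "bnd t"
  then obtain A B where A: "\<And>n. \<bar>s n\<bar> \<le> A" and B: "\<And>n. \<bar>t n\<bar> \<le> B" unfolding bnd_def by blast
  have "\<bar>s n * t n\<bar> \<le> A * B" for n
    unfolding abs_mult by (rule mult_mono[OF A B]) (use A[of 0] in auto)
  then show ?thesis unfolding bnd_def by blast
qed

lemma bnd_const: "bnd (\<lambda>n. c)"
  unfolding bnd_def by blast

lemma bnd_scale: "bnd s \<Longrightarrow> bnd (\<lambda>n. c * s n)"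
  using bnd_mult[OF bnd_const] by blast

lemma bnd_sum: "(\<And>i. i \<in> I \<Longrightarrow> bnd (f i)) \<Longrightarrow> bnd (\<lambda>n. \<Sum>i\<in>I. f i n)"
proof (induction I rule: infinite_finite_induct)
  case (infinite A) then show ?case by (simp add: bnd_const)
next
  case empty then show ?case by (simp add: bnd_const)
next
  case (insert x F)
  then show ?case by (simp add: bnd_add)
qed

lemma bnd_cos: "bnd (\<lambda>n. cos (a * real n))"
  unfolding bnd_def by (intro exI[of _ 1]) simp

lemma ces_add: "ces (\<lambda>n. s n + t n) = (\<lambda>n. ces s n + ces t n)"
  unfolding ces_def by (auto simp: sum.distrib add_divide_distrib)

lemma ces_scale: "ces (\<lambda>n. c * s n) = (\<lambda>n. c * ces s n)"
  unfolding ces_def by (auto simp: sum_distrib_left)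

lemma mu_add: "bnd s \<Longrightarrow> bnd t \<Longrightarrow> mu (\<lambda>n. s n + t n) = mu s + mu t"
  by (rule mu_eqI) (simp add: ces_add tendsto_add mu_tendsto)

lemma mu_scale: "bnd s \<Longrightarrow> mu (\<lambda>n. c * s n) = c * mu s"
  by (rule mu_eqI) (simp add: ces_scale tendsto_mult mu_tendsto)

lemma mu_const: "mu (\<lambda>n. c) = c"
proof (rule mu_seq)
  have "ces (\<lambda>n. c) = (\<lambda>n. c)" unfolding ces_def by auto
  then show "(ces (\<lambda>n. c) \<longlongrightarrow> c) sequentially" by simp
qed

lemma mu_sum: "(\<And>i. i \<in> I \<Longrightarrow> bnd (f i)) \<Longrightarrow> mu (\<lambda>n. \<Sum>i\<in>I. f i n) = (\<Sum>i\<in>I. mu (f i))"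
proof (induction I rule: infinite_finite_induct)
  case (infinite A) then show ?case using mu_const[of 0] by simp
next
  case empty then show ?case using mu_const[of 0] by simp
next
  case (insert x F)
  have "mu (\<lambda>n. \<Sum>i\<in>insert x F. f i n) = mu (\<lambda>n. f x n + (\<Sum>i\<in>F. f i n))"
    using insert by simp
  also have "\<dots> = mu (f x) + mu (\<lambda>n. \<Sum>i\<in>F. f i n)"
    using insert by (intro mu_add bnd_sum) auto
  also have "\<dots> = (\<Sum>i\<in>insert x F. mu (f i))" using insert by simp
  finally show ?case .
qed

lemma mu_nonneg: assumes "bnd s" "\<And>n. 0 \<le> s n" shows "0 \<le> mu s"
proof (rule tendsto_lowerbound[OF mu_tendsto[OF assms(1)] _ UF_nontriv])
  show "eventually (\<lambda>n. 0 \<le> ces s n) UF"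
    unfolding ces_def using assms(2) by (intro always_eventually allI divide_nonneg_pos sum_nonneg) auto
qed

lemma mu_mono: assumes "bnd s" "bnd t" "\<And>n. s n \<le> t n" shows "mu s \<le> mu t"
proof -
  have "0 \<le> mu (\<lambda>n. t n + (-1) * s n)"
    using assms by (intro mu_nonneg bnd_add bnd_scale) auto
  also have "\<dots> = mu t + mu (\<lambda>n. (-1) * s n)" using assms by (intro mu_add bnd_scale) auto
  also have "\<dots> = mu t - mu s" using assms by (simp only: mu_scale)
  finally show ?thesis by simp
qed

lemma mu_abs_le: assumes "\<And>n. \<bar>s n\<bar> \<le> B" shows "\<bar>mu s\<bar> \<le> B"
proof -
  have bs: "bnd s" using assms unfolding bnd_def by blast
  have "mu s \<le> mu (\<lambda>n. B)" using assms by (intro mu_mono bs bnd_const) (auto simp: abs_le_iff)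
  moreover have "mu (\<lambda>n. - B) \<le> mu s" using assms by (intro mu_mono bs bnd_const) (smt (verit))
  ultimately show ?thesis by (simp add: mu_const abs_le_iff)
qed



lemma cos_sum: "2 * sin (a/2) * (\<Sum>k\<le>n. cos (a * real k)) = sin ((real n + 1/2) * a) + sin (a/2)"
proof (induction n)
  case 0 then show ?case by simp
next
  case (Suc n)
  have key: "2 * sin (a/2) * cos (a * real (Suc n)) = sin ((real (Suc n) + 1/2) * a) - sin ((real n + 1/2) * a)"
  proof -
    have "sin ((real (Suc n) + 1/2) * a) = sin (a * real (Suc n) + a/2)" by (simp add: algebra_simps)
    moreover have "sin ((real n + 1/2) * a) = sin (a * real (Suc n) - a/2)" by (simp add: algebra_simps)
    ultimately show ?thesis by (simp add: sin_add sin_diff)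
  qed
  have "2 * sin (a/2) * (\<Sum>k\<le>Suc n. cos (a * real k))
      = 2 * sin (a/2) * (\<Sum>k\<le>n. cos (a * real k)) + 2 * sin (a/2) * cos (a * real (Suc n))"
    by (simp add: algebra_simps)
  also have "\<dots> = sin ((real (Suc n) + 1/2) * a) + sin (a/2)" using Suc key by simp
  finally show ?case .
qed

lemma mu_cos: assumes "sin (a/2) \<noteq> 0" shows "mu (\<lambda>n. cos (a * real n)) = 0"
proof (rule mu_seq)
  let ?C = "1 / \<bar>sin (a/2)\<bar>"
  have sp: "0 < \<bar>sin (a/2)\<bar>" using assms by simp
  have bS: "\<bar>\<Sum>k\<le>n. cos (a * real k)\<bar> \<le> ?C" for n
  proof -
    have "\<bar>2 * sin (a/2) * (\<Sum>k\<le>n. cos (a * real k))\<bar> \<le> 2"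
      unfolding cos_sum by (smt (verit) sin_le_one sin_ge_minus_one)
    then have "\<bar>sin (a/2)\<bar> * \<bar>\<Sum>k\<le>n. cos (a * real k)\<bar> \<le> 1" by (simp add: abs_mult)
    then show ?thesis using sp by (simp add: field_simps)
  qed
  have ev: "eventually (\<lambda>n. norm (ces (\<lambda>n. cos (a * real n)) n) \<le> ?C * inverse (real (Suc n))) sequentially"
  proof (intro always_eventually allI)
    fix n
    have "norm (ces (\<lambda>n. cos (a * real n)) n) = \<bar>\<Sum>k\<le>n. cos (a * real k)\<bar> / real (Suc n)"
      unfolding ces_def by simp
    also have "\<dots> \<le> ?C / real (Suc n)" using bS by (intro divide_right_mono) auto
    finally show "norm (ces (\<lambda>n. cos (a * real n)) n) \<le> ?C * inverse (real (Suc n))"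
      by (simp only: divide_inverse)
  qed
  have lim: "((\<lambda>n. ?C * inverse (real (Suc n))) \<longlongrightarrow> 0) sequentially"
    using tendsto_mult[OF tendsto_const LIMSEQ_inverse_real_of_nat, of ?C] by (simp only: mult_zero_right)
  show "(ces (\<lambda>n. cos (a * real n)) \<longlongrightarrow> 0) sequentially"
    by (rule Lim_null_comparison[OF ev lim])
qed

lemma mu_cc:
  assumes "0 < t" "t < pi" "0 < u" "u < pi"
  shows "mu (\<lambda>n. cos (t * real n) * cos (u * real n)) = (if t = u then 1/2 else 0)"
proof -
  have eq: "(\<lambda>n. cos (t * real n) * cos (u * real n))
      = (\<lambda>n. (1/2) * cos ((t - u) * real n) + (1/2) * cos ((t + u) * real n))"
  proof (rule ext)
    fix n
    have "cos (t * real n) * cos (u * real n) = (cos (t * real n - u * real n) + cos (t * real n + u * real n)) / 2"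
      by (rule cos_times_cos)
    also have "\<dots> = (cos ((t - u) * real n) + cos ((t + u) * real n)) / 2"
      by (simp only: left_diff_distrib distrib_right)
    also have "\<dots> = (1/2) * cos ((t - u) * real n) + (1/2) * cos ((t + u) * real n)"
      by (simp only: add_divide_distrib)
    finally show "cos (t * real n) * cos (u * real n) = (1/2) * cos ((t - u) * real n) + (1/2) * cos ((t + u) * real n)" .
  qed
  have s2: "sin ((t + u)/2) \<noteq> 0" using assms by (intro order.strict_implies_not_eq[symmetric] sin_gt_zero) auto
  have m2: "mu (\<lambda>n. cos ((t + u) * real n)) = 0" by (rule mu_cos[OF s2])
  have "mu (\<lambda>n. cos (t * real n) * cos (u * real n))
      = (1/2) * mu (\<lambda>n. cos ((t - u) * real n)) + (1/2) * mu (\<lambda>n. cos ((t + u) * real n))"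
  proof -
    have "mu (\<lambda>n. (1/2) * cos ((t - u) * real n) + (1/2) * cos ((t + u) * real n))
       = mu (\<lambda>n. (1/2) * cos ((t - u) * real n)) + mu (\<lambda>n. (1/2) * cos ((t + u) * real n))"
      by (rule mu_add; rule bnd_scale; rule bnd_cos)
    also have "\<dots> = (1/2) * mu (\<lambda>n. cos ((t - u) * real n)) + (1/2) * mu (\<lambda>n. cos ((t + u) * real n))"
      by (simp only: mu_scale[OF bnd_cos])
    finally show ?thesis unfolding eq .
  qed
  also have "\<dots> = (1/2) * mu (\<lambda>n. cos ((t - u) * real n))" using m2 by simp
  also have "\<dots> = (if t = u then 1/2 else 0)"
  proof (cases "t = u")
    case True then show ?thesis by (simp add: mu_const)
  next
    case False
    have "sin ((t - u)/2) \<noteq> 0"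
    proof (cases "t < u")
      case True
      have "0 < sin ((u - t)/2)" using assms True by (intro sin_gt_zero) auto
      moreover have "sin ((t - u)/2) = - sin ((u - t)/2)"
      proof -
        have "(t - u)/2 = - ((u - t)/2)" by (simp add: field_simps)
        then show ?thesis by (simp only: sin_minus)
      qed
      ultimately show ?thesis by simp
    next
      case False
      then have "u < t" using \<open>t \<noteq> u\<close> by simp
      then have "0 < sin ((t - u)/2)" using assms by (intro sin_gt_zero) auto
      then show ?thesis by simp
    qed
    then show ?thesis using False mu_cos by simp
  qed
  finally show ?thesis .
qed



lemma mu_lin3:
  assumes "bnd P" "bnd Q" "bnd R"
  shows "mu (\<lambda>n. P n + (-4) * Q n + 4 * R n) = mu P + (-4) * mu Q + 4 * mu R"
proof -
  have "mu (\<lambda>n. P n + (-4) * Q n + 4 * R n) = mu (\<lambda>n. P n + (-4) * Q n) + mu (\<lambda>n. 4 * R n)"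
    using assms by (intro mu_add bnd_add bnd_scale)
  also have "\<dots> = mu P + mu (\<lambda>n. (-4) * Q n) + mu (\<lambda>n. 4 * R n)"
    using mu_add[OF assms(1) bnd_scale[OF assms(2), of "-4"]] by (simp only:)
  also have "\<dots> = mu P + (-4) * mu Q + 4 * mu R"
    using assms by (simp only: mu_scale)
  finally show ?thesis .
qed

lemma bessel:
  assumes s: "bnd s" and T: "finite T" "T \<subseteq> {0<..<pi}"
  shows "(\<Sum>t\<in>T. (mu (\<lambda>n. s n * cos (t * real n)))\<^sup>2) \<le> mu (\<lambda>n. (s n)\<^sup>2) / 2"
proof -
  define a where "a t = mu (\<lambda>n. s n * cos (t * real n))" for t
  define c where "c t n = cos (t * real n)" for t n
  define y where "y n = (\<Sum>t\<in>T. a t * c t n)" for n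
  have bc: "bnd (c t)" for t unfolding c_def by (rule bnd_cos)
  have hy: "bnd y" unfolding y_def by (intro bnd_sum bnd_scale bc)
  have b1: "bnd (\<lambda>n. (s n)\<^sup>2)" unfolding power2_eq_square by (intro bnd_mult s)
  have b2: "bnd (\<lambda>n. \<Sum>t\<in>T. a t * (s n * c t n))" by (intro bnd_sum bnd_scale bnd_mult s bc)
  have b3: "bnd (\<lambda>n. \<Sum>t\<in>T. \<Sum>u\<in>T. (a t * a u) * (c t n * c u n))" by (intro bnd_sum bnd_scale bnd_mult bc)
  have pw: "(s n - 2 * y n)\<^sup>2 = (s n)\<^sup>2 + (-4) * (\<Sum>t\<in>T. a t * (s n * c t n))
        + 4 * (\<Sum>t\<in>T. \<Sum>u\<in>T. (a t * a u) * (c t n * c u n))" for n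
  proof -
    have e1: "s n * y n = (\<Sum>t\<in>T. a t * (s n * c t n))"
      unfolding y_def by (simp add: sum_distrib_left algebra_simps)
    have e2: "y n * y n = (\<Sum>t\<in>T. \<Sum>u\<in>T. (a t * a u) * (c t n * c u n))"
      unfolding y_def sum_product by (simp add: algebra_simps)
    have "(s n - 2 * y n)\<^sup>2 = (s n)\<^sup>2 + (-4) * (s n * y n) + 4 * (y n * y n)"
      by (simp add: power2_eq_square algebra_simps)
    then show ?thesis using e1 e2 by simp
  qed
  have m2: "mu (\<lambda>n. \<Sum>t\<in>T. a t * (s n * c t n)) = (\<Sum>t\<in>T. (a t)\<^sup>2)"
  proof -
    have "mu (\<lambda>n. \<Sum>t\<in>T. a t * (s n * c t n)) = (\<Sum>t\<in>T. mu (\<lambda>n. a t * (s n * c t n)))"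
      by (rule mu_sum) (intro bnd_scale bnd_mult s bc)
    also have "\<dots> = (\<Sum>t\<in>T. a t * mu (\<lambda>n. s n * c t n))"
      by (intro sum.cong refl mu_scale bnd_mult s bc)
    also have "\<dots> = (\<Sum>t\<in>T. (a t)\<^sup>2)" unfolding a_def c_def by (simp add: power2_eq_square)
    finally show ?thesis .
  qed
  have m3: "mu (\<lambda>n. \<Sum>t\<in>T. \<Sum>u\<in>T. (a t * a u) * (c t n * c u n)) = (\<Sum>t\<in>T. (a t)\<^sup>2) / 2"
  proof -
    have "mu (\<lambda>n. \<Sum>t\<in>T. \<Sum>u\<in>T. (a t * a u) * (c t n * c u n))
        = (\<Sum>t\<in>T. mu (\<lambda>n. \<Sum>u\<in>T. (a t * a u) * (c t n * c u n)))"
      by (rule mu_sum) (intro bnd_sum bnd_scale bnd_mult bc)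
    also have "\<dots> = (\<Sum>t\<in>T. \<Sum>u\<in>T. mu (\<lambda>n. (a t * a u) * (c t n * c u n)))"
      by (intro sum.cong refl mu_sum bnd_scale bnd_mult bc)
    also have "\<dots> = (\<Sum>t\<in>T. \<Sum>u\<in>T. (a t * a u) * (if t = u then 1/2 else 0))"
    proof (intro sum.cong refl)
      fix t u assume "t \<in> T" "u \<in> T"
      then have tu: "0 < t" "t < pi" "0 < u" "u < pi" using T(2) by auto
      have "mu (\<lambda>n. (a t * a u) * (c t n * c u n)) = (a t * a u) * mu (\<lambda>n. c t n * c u n)"
        by (intro mu_scale bnd_mult bc)
      also have "\<dots> = (a t * a u) * (if t = u then 1/2 else 0)"
        unfolding c_def using mu_cc[OF tu] by simp
      finally show "mu (\<lambda>n. (a t * a u) * (c t n * c u n)) = (a t * a u) * (if t = u then 1/2 else 0)" .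
    qed
    also have "\<dots> = (\<Sum>t\<in>T. (a t)\<^sup>2 / 2)"
    proof (intro sum.cong refl)
      fix t assume t: "t \<in> T"
      have "(\<Sum>u\<in>T. (a t * a u) * (if t = u then 1/2 else 0)) = (\<Sum>u\<in>T. (if t = u then (a t * a u) / 2 else 0))"
        by (intro sum.cong refl) auto
      also have "\<dots> = (a t * a t) / 2" using t T(1) by (simp add: sum.delta)
      finally show "(\<Sum>u\<in>T. (a t * a u) * (if t = u then 1/2 else 0)) = (a t)\<^sup>2 / 2"
        by (simp add: power2_eq_square)
    qed
    also have "\<dots> = (\<Sum>t\<in>T. (a t)\<^sup>2) / 2" by (simp add: sum_divide_distrib)
    finally show ?thesis .
  qed
  have "0 \<le> mu (\<lambda>n. (s n - 2 * y n)\<^sup>2)"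
  proof (rule mu_nonneg)
    have bd: "bnd (\<lambda>n. s n - 2 * y n)" using bnd_add[OF s bnd_scale[OF hy, of "-2"]] by simp
    show "bnd (\<lambda>n. (s n - 2 * y n)\<^sup>2)" unfolding power2_eq_square by (rule bnd_mult[OF bd bd])
  qed simp
  also have "\<dots> = mu (\<lambda>n. (s n)\<^sup>2 + (-4) * (\<Sum>t\<in>T. a t * (s n * c t n))
        + 4 * (\<Sum>t\<in>T. \<Sum>u\<in>T. (a t * a u) * (c t n * c u n)))"
    using pw by simp
  also have "\<dots> = mu (\<lambda>n. (s n)\<^sup>2) + (-4) * mu (\<lambda>n. \<Sum>t\<in>T. a t * (s n * c t n))
        + 4 * mu (\<lambda>n. \<Sum>t\<in>T. \<Sum>u\<in>T. (a t * a u) * (c t n * c u n))"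
    by (rule mu_lin3[OF b1 b2 b3])
  also have "\<dots> = mu (\<lambda>n. (s n)\<^sup>2) - 2 * (\<Sum>t\<in>T. (a t)\<^sup>2)"
    unfolding m2 m3 by simp
  finally show ?thesis unfolding a_def by simp
qed



definition phi :: "real \<Rightarrow> (nat \<Rightarrow>\<^sub>C real) \<Rightarrow> real" where
  "phi t x = mu (\<lambda>n. apply_bcontfun x n * cos (t * real n))"

lemma bc_bound: "\<bar>apply_bcontfun x n\<bar> \<le> norm x"
  using norm_bounded[of x n] by simp

lemma bnd_bc: "bnd (apply_bcontfun x)"
  unfolding bnd_def using bc_bound by blast

lemma phi_add: "phi t (x + y) = phi t x + phi t y"
proof -
  have "phi t (x + y) = mu (\<lambda>n. apply_bcontfun x n * cos (t * real n) + apply_bcontfun y n * cos (t * real n))"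
    unfolding phi_def by (simp add: distrib_right)
  also have "\<dots> = phi t x + phi t y"
    unfolding phi_def by (intro mu_add bnd_mult bnd_bc bnd_cos)
  finally show ?thesis .
qed

lemma phi_scale: "phi t (r *\<^sub>R x) = r * phi t x"
proof -
  have "phi t (r *\<^sub>R x) = mu (\<lambda>n. r * (apply_bcontfun x n * cos (t * real n)))"
    unfolding phi_def by (simp add: mult.assoc)
  also have "\<dots> = r * phi t x"
    unfolding phi_def by (intro mu_scale bnd_mult bnd_bc bnd_cos)
  finally show ?thesis .
qed

lemma phi_bound: "\<bar>phi t x\<bar> \<le> norm x"
  unfolding phi_def
proof (rule mu_abs_le)
  fix n
  have "\<bar>apply_bcontfun x n * cos (t * real n)\<bar> = \<bar>apply_bcontfun x n\<bar> * \<bar>cos (t * real n)\<bar>"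
    by (rule abs_mult)
  also have "\<dots> \<le> norm x * 1" by (intro mult_mono bc_bound) auto
  finally show "\<bar>apply_bcontfun x n * cos (t * real n)\<bar> \<le> norm x" by simp
qed

lemma phi_bl: "bounded_linear (phi t)"
  by (rule bounded_linear_intro[where K=1]) (auto simp: phi_add phi_scale phi_bound)

lemma ker_closed: "closed {x. phi t x = 0}"
  by (rule closed_Collect_eq[OF linear_continuous_on[OF phi_bl] continuous_on_const])

lemma phi_zero: "phi t 0 = 0"
  using phi_scale[of t 0 0] by simp

lemma ker_subspace: "subspace {x. phi t x = 0}"
  unfolding subspace_def by (auto simp: phi_zero phi_add phi_scale)

lemma phi_cnt: "countable {t \<in> {0<..<pi}. phi t x \<noteq> 0}"
proof -
  define A where "A k = {t \<in> {0<..<pi}. inverse (real (Suc k)) \<le> \<bar>phi t x\<bar>}" for k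
  have fin: "finite (A k)" for k
  proof (rule ccontr)
    assume inf: "infinite (A k)"
    define e where "e = inverse (real (Suc k))"
    have e: "0 < e" unfolding e_def by simp
    define m where "m = nat \<lceil>(norm x)\<^sup>2 / (2 * e\<^sup>2)\<rceil> + 1"
    obtain T where T: "finite T" "card T = m" "T \<subseteq> A k"
      using infinite_arbitrarily_large[OF inf] by blast
    have Tp: "T \<subseteq> {0<..<pi}" using T(3) unfolding A_def by blast
    have "(\<Sum>t\<in>T. (phi t x)\<^sup>2) \<le> mu (\<lambda>n. (apply_bcontfun x n)\<^sup>2) / 2"
      unfolding phi_def by (rule bessel[OF bnd_bc T(1) Tp])
    also have "mu (\<lambda>n. (apply_bcontfun x n)\<^sup>2) \<le> (norm x)\<^sup>2"
    proof -
      have "\<bar>mu (\<lambda>n. (apply_bcontfun x n)\<^sup>2)\<bar> \<le> (norm x)\<^sup>2"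
      proof (rule mu_abs_le)
        fix n
        have "\<bar>apply_bcontfun x n\<bar>\<^sup>2 \<le> (norm x)\<^sup>2"
          by (rule power_mono[OF bc_bound]) simp
        then show "\<bar>(apply_bcontfun x n)\<^sup>2\<bar> \<le> (norm x)\<^sup>2" by simp
      qed
      then show ?thesis by simp
    qed
    finally have up: "(\<Sum>t\<in>T. (phi t x)\<^sup>2) \<le> (norm x)\<^sup>2 / 2" by simp
    have "(\<Sum>t\<in>T. e\<^sup>2) \<le> (\<Sum>t\<in>T. (phi t x)\<^sup>2)"
    proof (rule sum_mono)
      fix t assume "t \<in> T"
      then have "e \<le> \<bar>phi t x\<bar>" using T(3) unfolding A_def e_def by blast
      then have "e\<^sup>2 \<le> \<bar>phi t x\<bar>\<^sup>2" using e by (intro power_mono) auto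
      then show "e\<^sup>2 \<le> (phi t x)\<^sup>2" by simp
    qed
    then have "real m * e\<^sup>2 \<le> (norm x)\<^sup>2 / 2" using up T(2) by simp
    moreover have "(norm x)\<^sup>2 / (2 * e\<^sup>2) < real m"
      unfolding m_def by linarith
    ultimately show False using e by (simp add: field_simps)
  qed
  have "{t \<in> {0<..<pi}. phi t x \<noteq> 0} \<subseteq> (\<Union>k. A k)"
  proof
    fix t assume t: "t \<in> {t \<in> {0<..<pi}. phi t x \<noteq> 0}"
    then have "0 < \<bar>phi t x\<bar>" by simp
    then obtain k where k: "inverse (real (Suc k)) < \<bar>phi t x\<bar>" using reals_Archimedean by blast
    have "t \<in> A k" unfolding A_def using t k by simp
    then show "t \<in> (\<Union>k. A k)" by blast
  qed
  moreover have "countable (\<Union>k. A k)" using fin by (intro countable_UN) (auto intro: countable_finite)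
  ultimately show ?thesis by (rule countable_subset)
qed

lemma cos_bc: "(\<lambda>n::nat. cos (t * real n)) \<in> bcontfun"
  by (rule bcontfun_normI[where b=1]) auto

lemma phi_cos: assumes "0 < t" "t < pi" shows "phi t (Bcontfun (\<lambda>n. cos (t * real n))) = 1/2"
  unfolding phi_def Bcontfun_inverse[OF cos_bc] using mu_cc[OF assms assms] by simp

lemma w1_interval: assumes "\<not> CH" shows "w1 <o |{0<..<pi::real}|"
proof -
  obtain A :: "real set" where A: "\<not> countable A" "\<not> A \<approx> (UNIV :: real set)"
    using assms unfolding CH_def by blast
  have "|A| \<le>o |UNIV :: real set|" by (rule card_of_mono1) simp
  moreover have "\<not> |A| =o |UNIV :: real set|" using A(2) eqpoll_iff_card_of_ordIso by blast
  ultimately have AU: "|A| <o |UNIV :: real set|" using ordLeq_iff_ordLess_or_ordIso by blast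
  have "inj_on (\<lambda>t. arctan t + pi/2) UNIV" by (auto simp: inj_on_def arctan_eq_iff)
  moreover have "(\<lambda>t. arctan t + pi/2) ` UNIV \<subseteq> {0<..<pi}"
    using arctan_bounded by (auto simp: field_simps) (smt (verit) arctan_bounded)+
  ultimately have "|UNIV :: real set| \<le>o |{0<..<pi::real}|" using card_of_ordLeq by blast
  then have "|A| <o |{0<..<pi::real}|" using AU ordLess_ordLeq_trans by blast
  then show ?thesis using uncountable_w1[OF A(1)] ordLeq_ordLess_trans by blast
qed

theorem corollary3p8:
  assumes "\<not> CH"
  shows "\<not> (\<exists>S :: (nat \<Rightarrow>\<^sub>C real) set. overcomplete S)"
proof
  assume "\<exists>S :: (nat \<Rightarrow>\<^sub>C real) set. overcomplete S"
  then obtain S :: "(nat \<Rightarrow>\<^sub>C real) set" where ov: "overcomplete S" by blast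
  define N where "N x = {t \<in> {0<..<pi}. phi t x \<noteq> 0}" for x
  have "\<And>x. x \<in> S \<Longrightarrow> countable (N x)" unfolding N_def by (rule phi_cnt)
  then obtain t where t: "t \<in> {0<..<pi}" and card: "|{x\<in>S. t \<notin> N x}| =o |S|"
    using comb[OF w1_interval[OF assms]] by blast
  let ?L = "{x\<in>S. t \<notin> N x}"
  have "?L \<approx> S" using card eqpoll_iff_card_of_ordIso by blast
  moreover have "?L \<subseteq> S" by blast
  ultimately have dense: "closure (span ?L) = UNIV" using ov unfolding overcomplete_def by blast
  have sub: "?L \<subseteq> {x. phi t x = 0}" using t unfolding N_def by auto
  have "span ?L \<subseteq> {x. phi t x = 0}" by (rule span_minimal[OF sub ker_subspace])
  then have "closure (span ?L) \<subseteq> {x. phi t x = 0}" by (rule closure_minimal[OF _ ker_closed])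
  then have "phi t (Bcontfun (\<lambda>n. cos (t * real n))) = 0" using dense by blast
  moreover have "phi t (Bcontfun (\<lambda>n. cos (t * real n))) = 1/2" using t by (intro phi_cos) auto
  ultimately show False by simp
qed


end
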